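(* In the setting $|H|=1$ of the context (with Assumption 1), the Shor relaxation is exact ($v^\star=c^\star$) if for every $I\subseteq M$ with $|I|\ge2$ the convex problem in the variables $(\mu_i)_{i\in I}$, $x_1$, $w_1$: $\min\ \sum_{j\in N\setminus\{1\}}x_j(\boldsymbol{\mu})^2+x_1^2-w_1$ subject to $d_1^*+\sum_{i\in I}\xi_i\mu_i=0$; $c_1+\sum_{i\in I}a_{i1}\mu_i=0$; $\xi_iw_1+2a_{i1}x_1+2\sum_{j\in N\setminus\{1\}}a_{ij}x_j(\boldsymbol{\mu})=b_i$ for $i\in I$; $\xi_iw_1+2a_{i1}x_1+2\sum_{j\in N\setminus\{1\}}a_{ij}x_j(\boldsymbol{\mu})\le b_i$ for $i\in M\setminus I$; $\mu_i\ge0$ for $i\in I$, (where $\mu_i=0$ for $i\in M\setminus I$) has nonnegative optimal value (with the convention that an infeasible problem has optimal value $+\infty$).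
   Context: Let $N=\{1,\dots,n\}$, $M=\{1,\dots,m\}$. Data: reals $D_{jj}$ ($j\in N$), $c_j$, $a_{ij}$, $b_i$, $\xi_i$ ($i\in M$, $j\in N$). The diagonal QCQP (P) is $c^\star=\inf\{\sum_{j}D_{jj}x_j^2+2\sum_jc_jx_j : \xi_i\sum_jx_j^2+2\sum_ja_{ij}x_j\le b_i,\ i\in M\}$, i.e. all constraint Hessians are ${\bf A}^i=\xi_i{\bf I}$. Its Shor relaxation is $v^\star=\inf\{{\bf D}\bullet{\bf X}+2{\bf c}^\top{\bf x} : \xi_i\,\mathrm{trace}({\bf X})+2{\bf a}_i^\top{\bf x}\le b_i\ (i\in M),\ {\bf X}-{\bf x}{\bf x}^\top\succeq{\bf O}\}$ with ${\bf D}=\mathrm{diag}(D_{jj})$. Assumption 1: (P) is feasible; some $\bar{\bf y}\ge0$ has $\sum_i\bar y_i\xi_i>0$; the Shor relaxation has a feasible point in the interior of its feasible region. It is assumed that $d_1^*=\min_{j\in N}D_{jj}$ is attained uniquely at $j=1$. For $j\in N\setminus\{1\}$, $x_j(\boldsymbol{\mu})=-\frac{c_j+\sum_{i\in M}a_{ij}\mu_i}{D_{jj}-d_1^*}$. *)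

theory Defs
  imports "HOL-Analysis.Analysis"
begin

text \<open>Index sets N = {1..n}, M = {1..m}. Data: D j = D_jj (diagonal of D), c j, a i j = a_ij,
  b i, xi i. Vectors are nat => real (only entries in N matter), matrices nat => nat => real.\<close>

definition psd_on :: "nat set \<Rightarrow> (nat \<Rightarrow> nat \<Rightarrow> real) \<Rightarrow> bool" where
  "psd_on N Y \<longleftrightarrow> (\<forall>j\<in>N. \<forall>k\<in>N. Y j k = Y k j) \<and>
     (\<forall>v::nat \<Rightarrow> real. (\<Sum>j\<in>N. \<Sum>k\<in>N. v j * Y j k * v k) \<ge> 0)"

definition pd_on :: "nat set \<Rightarrow> (nat \<Rightarrow> nat \<Rightarrow> real) \<Rightarrow> bool" where
  "pd_on N Y \<longleftrightarrow> (\<forall>j\<in>N. \<forall>k\<in>N. Y j k = Y k j) \<and>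
     (\<forall>v::nat \<Rightarrow> real. (\<exists>j\<in>N. v j \<noteq> 0) \<longrightarrow> (\<Sum>j\<in>N. \<Sum>k\<in>N. v j * Y j k * v k) > 0)"

definition shifted :: "(nat \<Rightarrow> nat \<Rightarrow> real) \<Rightarrow> (nat \<Rightarrow> real) \<Rightarrow> nat \<Rightarrow> nat \<Rightarrow> real" where
  "shifted X x = (\<lambda>j k. X j k - x j * x k)"

definition P_feasible ::
  "nat \<Rightarrow> nat \<Rightarrow> (nat \<Rightarrow> nat \<Rightarrow> real) \<Rightarrow> (nat \<Rightarrow> real) \<Rightarrow> (nat \<Rightarrow> real) \<Rightarrow> (nat \<Rightarrow> real) set" where
  "P_feasible n m a b xi = {x. \<forall>i\<in>{1..m}.
      xi i * (\<Sum>j\<in>{1..n}. (x j)\<^sup>2) + 2 * (\<Sum>j\<in>{1..n}. a i j * x j) \<le> b i}"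

definition P_obj :: "nat \<Rightarrow> (nat \<Rightarrow> real) \<Rightarrow> (nat \<Rightarrow> real) \<Rightarrow> (nat \<Rightarrow> real) \<Rightarrow> real" where
  "P_obj n D c x = (\<Sum>j\<in>{1..n}. D j * (x j)\<^sup>2) + 2 * (\<Sum>j\<in>{1..n}. c j * x j)"

definition c_star ::
  "nat \<Rightarrow> nat \<Rightarrow> (nat \<Rightarrow> real) \<Rightarrow> (nat \<Rightarrow> real) \<Rightarrow> (nat \<Rightarrow> nat \<Rightarrow> real) \<Rightarrow> (nat \<Rightarrow> real) \<Rightarrow> (nat \<Rightarrow> real) \<Rightarrow> ereal" where
  "c_star n m D c a b xi = (INF x\<in>P_feasible n m a b xi. ereal (P_obj n D c x))"

definition Shor_feasible ::
  "nat \<Rightarrow> nat \<Rightarrow> (nat \<Rightarrow> nat \<Rightarrow> real) \<Rightarrow> (nat \<Rightarrow> real) \<Rightarrow> (nat \<Rightarrow> real) \<Rightarrow> ((nat \<Rightarrow> real) \<times> (nat \<Rightarrow> nat \<Rightarrow> real)) set" where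
  "Shor_feasible n m a b xi = {(x, X). (\<forall>i\<in>{1..m}.
      xi i * (\<Sum>j\<in>{1..n}. X j j) + 2 * (\<Sum>j\<in>{1..n}. a i j * x j) \<le> b i)
      \<and> psd_on {1..n} (shifted X x)}"

definition Shor_obj :: "nat \<Rightarrow> (nat \<Rightarrow> real) \<Rightarrow> (nat \<Rightarrow> real) \<Rightarrow> (nat \<Rightarrow> real) \<Rightarrow> (nat \<Rightarrow> nat \<Rightarrow> real) \<Rightarrow> real" where
  "Shor_obj n D c x X = (\<Sum>j\<in>{1..n}. D j * X j j) + 2 * (\<Sum>j\<in>{1..n}. c j * x j)"

definition v_star ::
  "nat \<Rightarrow> nat \<Rightarrow> (nat \<Rightarrow> real) \<Rightarrow> (nat \<Rightarrow> real) \<Rightarrow> (nat \<Rightarrow> nat \<Rightarrow> real) \<Rightarrow> (nat \<Rightarrow> real) \<Rightarrow> (nat \<Rightarrow> real) \<Rightarrow> ereal" where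
  "v_star n m D c a b xi = (INF p\<in>Shor_feasible n m a b xi. ereal (Shor_obj n D c (fst p) (snd p)))"

definition Shor_strictly_feasible ::
  "nat \<Rightarrow> nat \<Rightarrow> (nat \<Rightarrow> nat \<Rightarrow> real) \<Rightarrow> (nat \<Rightarrow> real) \<Rightarrow> (nat \<Rightarrow> real) \<Rightarrow> (nat \<Rightarrow> real) \<Rightarrow> (nat \<Rightarrow> nat \<Rightarrow> real) \<Rightarrow> bool" where
  "Shor_strictly_feasible n m a b xi x X \<longleftrightarrow> (\<forall>i\<in>{1..m}.
      xi i * (\<Sum>j\<in>{1..n}. X j j) + 2 * (\<Sum>j\<in>{1..n}. a i j * x j) < b i)
      \<and> pd_on {1..n} (shifted X x)"

definition d1_star :: "nat \<Rightarrow> (nat \<Rightarrow> real) \<Rightarrow> real" where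
  "d1_star n D = Min (D ` {1..n})"

definition x_mu ::
  "nat \<Rightarrow> nat \<Rightarrow> (nat \<Rightarrow> real) \<Rightarrow> (nat \<Rightarrow> real) \<Rightarrow> (nat \<Rightarrow> nat \<Rightarrow> real) \<Rightarrow> (nat \<Rightarrow> real) \<Rightarrow> nat \<Rightarrow> real" where
  "x_mu n m D c a \<mu> j = - (c j + (\<Sum>i\<in>{1..m}. a i j * \<mu> i)) / (D j - d1_star n D)"

definition sub_feasible ::
  "nat \<Rightarrow> nat \<Rightarrow> (nat \<Rightarrow> real) \<Rightarrow> (nat \<Rightarrow> real) \<Rightarrow> (nat \<Rightarrow> nat \<Rightarrow> real) \<Rightarrow> (nat \<Rightarrow> real) \<Rightarrow> (nat \<Rightarrow> real)
    \<Rightarrow> nat set \<Rightarrow> ((nat \<Rightarrow> real) \<times> real \<times> real) set" where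
  "sub_feasible n m D c a b xi I = {(\<mu>, x1, w1).
      (\<forall>i. i \<notin> I \<longrightarrow> \<mu> i = 0) \<and>
      d1_star n D + (\<Sum>i\<in>I. xi i * \<mu> i) = 0 \<and>
      c 1 + (\<Sum>i\<in>I. a i 1 * \<mu> i) = 0 \<and>
      (\<forall>i\<in>I. xi i * w1 + 2 * a i 1 * x1 + 2 * (\<Sum>j\<in>{1..n}-{1}. a i j * x_mu n m D c a \<mu> j) = b i) \<and>
      (\<forall>i\<in>{1..m}-I. xi i * w1 + 2 * a i 1 * x1 + 2 * (\<Sum>j\<in>{1..n}-{1}. a i j * x_mu n m D c a \<mu> j) \<le> b i) \<and>
      (\<forall>i\<in>I. \<mu> i \<ge> 0)}"

definition sub_obj ::
  "nat \<Rightarrow> nat \<Rightarrow> (nat \<Rightarrow> real) \<Rightarrow> (nat \<Rightarrow> real) \<Rightarrow> (nat \<Rightarrow> nat \<Rightarrow> real) \<Rightarrow> (nat \<Rightarrow> real) \<Rightarrow> real \<Rightarrow> real \<Rightarrow> real" where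
  "sub_obj n m D c a \<mu> x1 w1 = (\<Sum>j\<in>{1..n}-{1}. (x_mu n m D c a \<mu> j)\<^sup>2) + x1\<^sup>2 - w1"

text \<open>Optimal value (infimum in ereal; +infinity if infeasible).\<close>
definition sub_val ::
  "nat \<Rightarrow> nat \<Rightarrow> (nat \<Rightarrow> real) \<Rightarrow> (nat \<Rightarrow> real) \<Rightarrow> (nat \<Rightarrow> nat \<Rightarrow> real) \<Rightarrow> (nat \<Rightarrow> real) \<Rightarrow> (nat \<Rightarrow> real)
    \<Rightarrow> nat set \<Rightarrow> ereal" where
  "sub_val n m D c a b xi I =
     (INF p\<in>sub_feasible n m D c a b xi I. ereal (sub_obj n m D c a (fst p) (fst (snd p)) (snd (snd p))))"

end

theory Submission
  imports Defs
begin


lemma subseq_conv: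
  fixes P :: "nat \<Rightarrow> nat \<Rightarrow> real"
  assumes "finite J" "\<forall>k. \<forall>j\<in>J. \<bar>P k j\<bar> \<le> B"
  shows "\<exists>r. strict_mono r \<and> (\<forall>j\<in>J. convergent (\<lambda>k. P (r k) j))"
  using assms
proof (induction J rule: finite_induct)
  case empty
  then show ?case by (rule_tac x=id in exI) (simp add: strict_mono_def)
next
  case (insert j0 J)
  then obtain r where r: "strict_mono r" "\<forall>j\<in>J. convergent (\<lambda>k. P (r k) j)" by auto
  have "bounded (range (\<lambda>k. P (r k) j0))"
    using insert.prems by (intro boundedI[where B=B]) auto
  then obtain l r2 where r2: "strict_mono r2" "((\<lambda>k. P (r k) j0) \<circ> r2) \<longlonglongrightarrow> l"
    using bounded_imp_convergent_subsequence by blast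
  have "strict_mono (r \<circ> r2)" using r(1) r2(1) by (simp add: strict_mono_o)
  moreover have "\<forall>j\<in>insert j0 J. convergent (\<lambda>k. P ((r \<circ> r2) k) j)"
  proof
    fix j assume "j \<in> insert j0 J"
    then show "convergent (\<lambda>k. P ((r \<circ> r2) k) j)"
    proof
      assume "j = j0" then show ?thesis using r2(2) by (auto simp: convergent_def o_def)
    next
      assume "j \<in> J"
      then obtain L where "(\<lambda>k. P (r k) j) \<longlonglongrightarrow> L" using r(2) by (auto simp: convergent_def)
      from LIMSEQ_subseq_LIMSEQ[OF this r2(1)] show ?thesis by (auto simp: convergent_def o_def)
    qed
  qed
  ultimately show ?case by blast
qed

lemma attain:
  fixes S :: "(nat \<Rightarrow> real) set" and h :: "(nat \<Rightarrow> real) \<Rightarrow> real"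
  assumes fin: "finite J" and ne: "S \<noteq> {}" and bnd: "\<forall>p\<in>S. \<forall>j\<in>J. \<bar>p j\<bar> \<le> B"
    and cl: "\<And>P L. (\<forall>k. P k \<in> S) \<Longrightarrow> (\<forall>j\<in>J. (\<lambda>k. P k j) \<longlonglongrightarrow> L j) \<Longrightarrow> L \<in> S"
    and ct: "\<And>P L. (\<forall>k. P k \<in> S) \<Longrightarrow> (\<forall>j\<in>J. (\<lambda>k. P k j) \<longlonglongrightarrow> L j) \<Longrightarrow> (\<lambda>k. h (P k)) \<longlonglongrightarrow> h L"
  shows "\<exists>p\<in>S. \<forall>p'\<in>S. h p \<le> h p'"
proof -
  have sub: "\<exists>r L. strict_mono r \<and> L \<in> S \<and> (\<lambda>k. h (P (r k))) \<longlonglongrightarrow> h L" if P: "\<forall>k. P k \<in> S" for P :: "nat \<Rightarrow> nat \<Rightarrow> real"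
  proof -
    obtain r where r: "strict_mono r" "\<forall>j\<in>J. convergent (\<lambda>k. P (r k) j)"
      using subseq_conv[OF fin, of P B] P bnd by auto
    define L where "L = (\<lambda>j. lim (\<lambda>k. P (r k) j))"
    have lim: "\<forall>j\<in>J. (\<lambda>k. P (r k) j) \<longlonglongrightarrow> L j"
      using r(2) by (auto simp: L_def convergent_LIMSEQ_iff)
    have "\<forall>k. P (r k) \<in> S" using P by auto
    then have "L \<in> S" "(\<lambda>k. h (P (r k))) \<longlonglongrightarrow> h L"
      using cl[of "\<lambda>k. P (r k)" L] ct[of "\<lambda>k. P (r k)" L] lim by auto
    then show ?thesis using r(1) by blast
  qed
  have bdd: "bdd_below (h ` S)"
  proof (rule ccontr)
    assume nb: "\<not> bdd_below (h ` S)"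
    have "\<forall>k::nat. \<exists>p\<in>S. h p < - real k"
    proof
      fix k :: nat
      show "\<exists>p\<in>S. h p < - real k"
      proof (rule ccontr)
        assume "\<not> ?thesis"
        then have "\<forall>p\<in>S. - real k \<le> h p" by (auto simp: not_less)
        then have "bdd_below (h ` S)" by (auto intro: bdd_belowI)
        with nb show False by simp
      qed
    qed
    then obtain P where P: "\<forall>k. P k \<in> S \<and> h (P k) < - real k" by metis
    then obtain r L where rL: "strict_mono r" "(\<lambda>k. h (P (r k))) \<longlonglongrightarrow> h L" using sub by blast
    then have "Bseq (\<lambda>k. h (P (r k)))" by (intro convergent_imp_Bseq) (auto simp: convergent_def)
    then obtain M where M: "\<forall>k. norm (h (P (r k))) \<le> M" by (auto elim: BseqE)
    obtain k :: nat where k: "M < real k" using reals_Archimedean2 by blast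
    have "real k \<le> real (r k)" using seq_suble[OF rL(1)] by simp
    then have "h (P (r k)) < - M" using P[rule_format, of "r k"] k by simp
    with M[rule_format, of k] show False by simp
  qed
  define v where "v = Inf (h ` S)"
  have "\<forall>k::nat. \<exists>p\<in>S. h p < v + inverse (real (Suc k))"
  proof
    fix k :: nat
    have "Inf (h ` S) < v + inverse (real (Suc k))" by (simp add: v_def)
    then obtain z where "z \<in> h ` S" "z < v + inverse (real (Suc k))"
      using cInf_lessD[of "h ` S"] ne by blast
    then show "\<exists>p\<in>S. h p < v + inverse (real (Suc k))" by auto
  qed
  then obtain P where P: "\<forall>k. P k \<in> S \<and> h (P k) < v + inverse (real (Suc k))" by metis
  then obtain r L where rL: "strict_mono r" "L \<in> S" "(\<lambda>k. h (P (r k))) \<longlonglongrightarrow> h L" using sub by blast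
  have i0: "(\<lambda>k. v + inverse (real (Suc (r k)))) \<longlonglongrightarrow> v + 0"
    using tendsto_add[OF tendsto_const LIMSEQ_subseq_LIMSEQ[OF LIMSEQ_inverse_real_of_nat rL(1)]]
    by (simp add: o_def)
  have "h L \<le> v + 0"
    by (rule LIMSEQ_le[OF rL(3) i0]) (use P in \<open>auto intro: less_imp_le\<close>)
  then have "\<forall>p'\<in>S. h L \<le> h p'" using cInf_lower[OF _ bdd] v_def by fastforce
  with rL(2) show ?thesis by blast
qed

definition dotJ :: "nat \<Rightarrow> (nat \<Rightarrow> real) \<Rightarrow> (nat \<Rightarrow> real) \<Rightarrow> real" where
  "dotJ n u v = (\<Sum>j\<in>{0..n}. u j * v j)"

lemma farkas:
  fixes v :: "nat \<Rightarrow> nat \<Rightarrow> real" and w :: "nat \<Rightarrow> real"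
  assumes "finite A" "\<forall>y. (\<forall>i\<in>A. dotJ n (v i) y \<le> 0) \<longrightarrow> dotJ n w y \<le> 0"
  shows "\<exists>\<mu>. (\<forall>i\<in>A. \<mu> i \<ge> 0) \<and> (\<forall>j\<in>{0..n}. w j = (\<Sum>i\<in>A. \<mu> i * v i j))"
  using assms
proof (induction A arbitrary: v w rule: finite_induct)
  case empty
  then have "dotJ n w w \<le> 0" by auto
  then have "(\<Sum>j\<in>{0..n}. (w j)\<^sup>2) \<le> 0" by (simp add: dotJ_def power2_eq_square)
  then have "\<forall>j\<in>{0..n}. (w j)\<^sup>2 = 0"
    using sum_nonneg_eq_0_iff[of "{0..n}" "\<lambda>j. (w j)\<^sup>2"] by (simp add: antisym sum_nonneg)
  then show ?case by auto
next
  case (insert k A)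
  show ?case
  proof (cases "\<forall>y. (\<forall>i\<in>A. dotJ n (v i) y \<le> 0) \<longrightarrow> dotJ n w y \<le> 0")
    case True
    then obtain \<mu> where mu: "\<forall>i\<in>A. \<mu> i \<ge> 0" "\<forall>j\<in>{0..n}. w j = (\<Sum>i\<in>A. \<mu> i * v i j)"
      using insert.IH by blast
    define \<mu>' where "\<mu>' = \<mu>(k := 0)"
    have "\<forall>j\<in>{0..n}. w j = (\<Sum>i\<in>insert k A. \<mu>' i * v i j)"
      using mu(2) insert.hyps by (auto simp: \<mu>'_def intro!: sum.cong)
    moreover have "\<forall>i\<in>insert k A. \<mu>' i \<ge> 0" using mu(1) by (simp add: \<mu>'_def)
    ultimately show ?thesis by blast
  next
    case False
    then obtain y' where y': "\<forall>i\<in>A. dotJ n (v i) y' \<le> 0" "dotJ n w y' > 0" by (auto simp: not_le)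
    define \<beta> where "\<beta> = dotJ n (v k) y'"
    have b: "\<beta> > 0" using insert.prems y' by (auto simp: \<beta>_def not_le[symmetric])
    define u where "u = (\<lambda>i j. v i j - (dotJ n (v i) y' / \<beta>) * v k j)"
    define w' where "w' = (\<lambda>j. w j - (dotJ n w y' / \<beta>) * v k j)"
    have lin: "dotJ n (\<lambda>j. f j - s * g j) z = dotJ n f z - s * dotJ n g z" for f g z s
      by (simp add: dotJ_def algebra_simps sum_subtractf sum_distrib_left)
    have lin2: "dotJ n f (\<lambda>j. z j - s * g j) = dotJ n f z - s * dotJ n f g" for f g z s
      by (simp add: dotJ_def algebra_simps sum_subtractf sum_distrib_left)
    have comm: "dotJ n f g = dotJ n g f" for f g by (simp add: dotJ_def mult.commute)
    have "\<forall>z. (\<forall>i\<in>A. dotJ n (u i) z \<le> 0) \<longrightarrow> dotJ n w' z \<le> 0"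
    proof (intro allI impI)
      fix z assume z: "\<forall>i\<in>A. dotJ n (u i) z \<le> 0"
      define y where "y = (\<lambda>j. z j - (dotJ n (v k) z / \<beta>) * y' j)"
      have "dotJ n (v k) y = dotJ n (v k) z - (dotJ n (v k) z / \<beta>) * dotJ n (v k) y'"
        unfolding y_def by (rule lin2)
      then have "dotJ n (v k) y = 0" using b by (simp add: \<beta>_def)
      moreover have "dotJ n (v i) y = dotJ n (u i) z" for i
      proof -
        have "dotJ n (v i) y = dotJ n (v i) z - (dotJ n (v k) z / \<beta>) * dotJ n (v i) y'"
          unfolding y_def by (rule lin2)
        moreover have "dotJ n (u i) z = dotJ n (v i) z - (dotJ n (v i) y' / \<beta>) * dotJ n (v k) z"
          unfolding u_def by (rule lin)
        ultimately show ?thesis by simp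
      qed
      ultimately have "\<forall>i\<in>insert k A. dotJ n (v i) y \<le> 0" using z by auto
      then have "dotJ n w y \<le> 0" using insert.prems by blast
      moreover have "dotJ n w y = dotJ n w' z"
      proof -
        have "dotJ n w y = dotJ n w z - (dotJ n (v k) z / \<beta>) * dotJ n w y'"
          unfolding y_def by (rule lin2)
        moreover have "dotJ n w' z = dotJ n w z - (dotJ n w y' / \<beta>) * dotJ n (v k) z"
          unfolding w'_def by (rule lin)
        ultimately show ?thesis by simp
      qed
      ultimately show "dotJ n w' z \<le> 0" by simp
    qed
    then obtain la where la: "\<forall>i\<in>A. la i \<ge> 0" "\<forall>j\<in>{0..n}. w' j = (\<Sum>i\<in>A. la i * u i j)"
      using insert.IH by blast
    define \<mu> where "\<mu> = la(k := (dotJ n w y' - (\<Sum>i\<in>A. la i * dotJ n (v i) y')) / \<beta>)"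
    have "(\<Sum>i\<in>A. la i * dotJ n (v i) y') \<le> 0"
      using la(1) y'(1) by (intro sum_nonpos) (simp add: mult_nonneg_nonpos)
    then have "\<mu> k \<ge> 0" using b y'(2) by (simp add: \<mu>_def)
    then have pos: "\<forall>i\<in>insert k A. \<mu> i \<ge> 0" using la(1) insert.hyps by (auto simp: \<mu>_def)
    have "\<forall>j\<in>{0..n}. w j = (\<Sum>i\<in>insert k A. \<mu> i * v i j)"
    proof
      fix j assume j: "j \<in> {0..n}"
      have "(\<Sum>i\<in>insert k A. \<mu> i * v i j) = \<mu> k * v k j + (\<Sum>i\<in>A. la i * v i j)"
        using insert.hyps by (auto simp: \<mu>_def intro!: sum.cong)
      also have "(\<Sum>i\<in>A. la i * v i j) = (\<Sum>i\<in>A. la i * u i j) + (\<Sum>i\<in>A. la i * dotJ n (v i) y') / \<beta> * v k j"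
      proof -
        have "(\<Sum>i\<in>A. la i * u i j) = (\<Sum>i\<in>A. la i * v i j - (la i * dotJ n (v i) y') / \<beta> * v k j)"
          by (rule sum.cong) (simp_all add: u_def algebra_simps)
        also have "\<dots> = (\<Sum>i\<in>A. la i * v i j) - (\<Sum>i\<in>A. la i * dotJ n (v i) y') / \<beta> * v k j"
          by (simp add: sum_subtractf sum_distrib_right sum_divide_distrib)
        finally show ?thesis by simp
      qed
      also have "(\<Sum>i\<in>A. la i * u i j) = w' j" using la(2) j by simp
      finally show "w j = (\<Sum>i\<in>insert k A. \<mu> i * v i j)"
        using b by (simp add: \<mu>_def w'_def field_simps)
    qed
    with pos show ?thesis by blast
  qed
qed



definition nv :: "(nat \<Rightarrow> real) \<Rightarrow> (nat \<Rightarrow> nat \<Rightarrow> real) \<Rightarrow> nat \<Rightarrow> nat \<Rightarrow> real" where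
  "nv xi a i = (\<lambda>j. if j = 0 then xi i else 2 * a i j)"

definition Kset where
  "Kset n m a b xi = {p. (\<forall>i\<in>{1..m}. dotJ n (nv xi a i) p \<le> b i) \<and> (\<Sum>j\<in>{1..n}. (p j)\<^sup>2) \<le> p 0}"

definition gf :: "nat \<Rightarrow> (nat \<Rightarrow> real) \<Rightarrow> (nat \<Rightarrow> real) \<Rightarrow> (nat \<Rightarrow> real) \<Rightarrow> real" where
  "gf n D c p = (\<Sum>j\<in>{1..n}. (D j - D 1) * (p j)\<^sup>2) + 2 * (\<Sum>j\<in>{1..n}. c j * p j) + D 1 * p 0"

definition sf :: "nat \<Rightarrow> (nat \<Rightarrow> real) \<Rightarrow> real" where
  "sf n p = p 0 - (\<Sum>j\<in>{1..n}. (p j)\<^sup>2)"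

definition gr :: "nat \<Rightarrow> (nat \<Rightarrow> real) \<Rightarrow> (nat \<Rightarrow> real) \<Rightarrow> (nat \<Rightarrow> real) \<Rightarrow> nat \<Rightarrow> real" where
  "gr n D c p = (\<lambda>j. if j = 0 then D 1 else 2 * (D j - D 1) * p j + 2 * c j)"

definition act where
  "act n m a b xi p = {i\<in>{1..m}. dotJ n (nv xi a i) p = b i}"

lemma dotJ_split: "dotJ n u p = u 0 * p 0 + (\<Sum>j\<in>{1..n}. u j * p j)"
  unfolding dotJ_def by (simp add: sum.atLeast_Suc_atMost)

lemma dot_nv: "dotJ n (nv xi a i) p = xi i * p 0 + 2 * (\<Sum>j\<in>{1..n}. a i j * p j)"
proof -
  have "(\<Sum>j\<in>{1..n}. nv xi a i j * p j) = (\<Sum>j\<in>{1..n}. 2 * (a i j * p j))"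
    by (rule sum.cong) (auto simp: nv_def)
  then show ?thesis by (simp add: dotJ_split nv_def sum_distrib_left)
qed

lemma dot_lin: "dotJ n u (\<lambda>j. p j + t * y j) = dotJ n u p + t * dotJ n u y"
  by (simp add: dotJ_def algebra_simps sum.distrib sum_distrib_left)

lemma g_exp: "gf n D c (\<lambda>j. p j + t * y j) = gf n D c p + t * dotJ n (gr n D c p) y
   + t\<^sup>2 * (\<Sum>j\<in>{1..n}. (D j - D 1) * (y j)\<^sup>2)"
proof -
  have g1: "(\<Sum>j\<in>{1..n}. gr n D c p j * y j) = (\<Sum>j\<in>{1..n}. (2 * (D j - D 1) * p j + 2 * c j) * y j)"
    by (rule sum.cong) (auto simp: gr_def)
  have "(\<Sum>j\<in>{1..n}. (D j - D 1) * (p j + t * y j)\<^sup>2) = (\<Sum>j\<in>{1..n}. (D j - D 1) * (p j)\<^sup>2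
     + t * (2 * (D j - D 1) * p j * y j) + t\<^sup>2 * ((D j - D 1) * (y j)\<^sup>2))"
    by (rule sum.cong) (simp_all add: power2_eq_square algebra_simps)
  also have "\<dots> = (\<Sum>j\<in>{1..n}. (D j - D 1) * (p j)\<^sup>2) + t * (\<Sum>j\<in>{1..n}. 2 * (D j - D 1) * p j * y j)
     + t\<^sup>2 * (\<Sum>j\<in>{1..n}. (D j - D 1) * (y j)\<^sup>2)"
    by (simp add: sum.distrib sum_distrib_left)
  finally have e1: "(\<Sum>j\<in>{1..n}. (D j - D 1) * (p j + t * y j)\<^sup>2) = \<dots>" .
  have e2: "(\<Sum>j\<in>{1..n}. c j * (p j + t * y j)) = (\<Sum>j\<in>{1..n}. c j * p j) + t * (\<Sum>j\<in>{1..n}. c j * y j)"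
    by (simp add: algebra_simps sum.distrib sum_distrib_left)
  have e3: "(\<Sum>j\<in>{1..n}. (2 * (D j - D 1) * p j + 2 * c j) * y j) =
     (\<Sum>j\<in>{1..n}. 2 * (D j - D 1) * p j * y j) + 2 * (\<Sum>j\<in>{1..n}. c j * y j)"
    by (simp only: distrib_right sum.distrib) (simp add: sum_distrib_left mult.assoc)
  show ?thesis
    unfolding gf_def e1 e2 dotJ_split[of n "gr n D c p"] g1 e3
    by (simp add: gr_def algebra_simps)
qed

lemma feas_move:
  assumes p: "p \<in> Kset n m a b xi" and s: "sf n p > 0"
    and y: "\<forall>i\<in>act n m a b xi p. dotJ n (nv xi a i) y \<le> 0"
  shows "eventually (\<lambda>t. (\<lambda>j. p j + t * y j) \<in> Kset n m a b xi) (at_right 0)"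
proof -
  have e1: "\<forall>i\<in>{1..m}. eventually (\<lambda>t. dotJ n (nv xi a i) (\<lambda>j. p j + t * y j) \<le> b i) (at_right 0)"
  proof
    fix i assume i: "i \<in> {1..m}"
    show "eventually (\<lambda>t. dotJ n (nv xi a i) (\<lambda>j. p j + t * y j) \<le> b i) (at_right 0)"
    proof (cases "i \<in> act n m a b xi p")
      case True
      then have h: "dotJ n (nv xi a i) p = b i" "dotJ n (nv xi a i) y \<le> 0" using y by (auto simp: act_def)
      from eventually_at_right_less[of "0::real"] show ?thesis
        by (rule eventually_mono) (simp add: dot_lin h mult_nonneg_nonpos)
    next
      case False
      then have lt: "dotJ n (nv xi a i) p < b i" using p i by (auto simp: act_def Kset_def order_le_less)
      have "((\<lambda>t. dotJ n (nv xi a i) p + t * dotJ n (nv xi a i) y) \<longlongrightarrow>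
              dotJ n (nv xi a i) p + 0 * dotJ n (nv xi a i) y) (at_right 0)"
        by (intro tendsto_intros)
      then have "eventually (\<lambda>t. dotJ n (nv xi a i) p + t * dotJ n (nv xi a i) y < b i) (at_right 0)"
        using lt by (intro order_tendstoD(2)) auto
      then show ?thesis by eventually_elim (simp add: dot_lin)
    qed
  qed
  have "((\<lambda>t. (p 0 + t * y 0) - (\<Sum>j\<in>{1..n}. (p j + t * y j)\<^sup>2)) \<longlongrightarrow>
          (p 0 + 0 * y 0) - (\<Sum>j\<in>{1..n}. (p j + 0 * y j)\<^sup>2)) (at_right 0)"
    by (intro tendsto_intros)
  then have e2: "eventually (\<lambda>t. 0 < (p 0 + t * y 0) - (\<Sum>j\<in>{1..n}. (p j + t * y j)\<^sup>2)) (at_right 0)"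
    using s by (intro order_tendstoD(1)) (auto simp: sf_def)
  have e3: "eventually (\<lambda>t. \<forall>i\<in>{1..m}. dotJ n (nv xi a i) (\<lambda>j. p j + t * y j) \<le> b i) (at_right 0)"
    by (rule eventually_ball_finite) (use e1 in auto)
  from e3 e2 show ?thesis
    by eventually_elim (auto simp: Kset_def)
qed

lemma nodescent:
  assumes p: "p \<in> Kset n m a b xi" and opt: "\<forall>p'\<in>Kset n m a b xi. gf n D c p \<le> gf n D c p'"
    and s: "sf n p > 0"
    and y: "\<forall>i\<in>act n m a b xi p. dotJ n (nv xi a i) y \<le> 0"
  shows "dotJ n (gr n D c p) y \<ge> 0"
proof (rule ccontr)
  define G where "G = dotJ n (gr n D c p) y"
  define Q where "Q = (\<Sum>j\<in>{1..n}. (D j - D 1) * (y j)\<^sup>2)"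
  assume "\<not> ?thesis"
  then have G: "G < 0" by (simp add: G_def)
  have "((\<lambda>t. t * Q) \<longlongrightarrow> 0 * Q) (at_right 0)" by (intro tendsto_intros)
  then have e: "eventually (\<lambda>t. t * Q < - G) (at_right 0)"
    using G by (intro order_tendstoD(2)) auto
  have "eventually (\<lambda>t. 0 < t \<and> t * Q < - G \<and> (\<lambda>j. p j + t * y j) \<in> Kset n m a b xi) (at_right 0)"
    using eventually_conj[OF eventually_at_right_less[of "0::real"] eventually_conj[OF e feas_move[OF p s y]]] .
  then obtain t where t: "0 < t" "t * Q < - G" "(\<lambda>j. p j + t * y j) \<in> Kset n m a b xi"
    using eventually_happens[of _ "at_right (0::real)"] by (auto simp: trivial_limit_at_right_real)
  have "gf n D c (\<lambda>j. p j + t * y j) = gf n D c p + t * (G + t * Q)"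
    by (simp add: g_exp G_def Q_def power2_eq_square algebra_simps)
  moreover have "t * (G + t * Q) < 0" using t by (intro mult_pos_neg) auto
  ultimately have "gf n D c (\<lambda>j. p j + t * y j) < gf n D c p" by simp
  with opt t(3) show False by fastforce
qed



lemma sq_bound: "(x::real)\<^sup>2 \<le> B \<Longrightarrow> \<bar>x\<bar> \<le> max 1 B"
proof (cases "\<bar>x\<bar> \<le> 1")
  case False
  then have "1 * \<bar>x\<bar> \<le> \<bar>x\<bar> * \<bar>x\<bar>" by (intro mult_right_mono) auto
  also have "\<bar>x\<bar> * \<bar>x\<bar> = x\<^sup>2" by (simp add: power2_eq_square)
  finally show "x\<^sup>2 \<le> B \<Longrightarrow> ?thesis" by simp
qed simp

lemma K_bound:
  assumes y: "\<forall>i\<in>{1..m}. y i \<ge> 0" and Y: "(\<Sum>i\<in>{1..m}. y i * xi i) > 0"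
  shows "\<exists>B. \<forall>p\<in>Kset n m a b xi. \<forall>j\<in>{0..n}. \<bar>p j\<bar> \<le> B"
proof -
  define Y where "Y = (\<Sum>i\<in>{1..m}. y i * xi i)"
  define al where "al = (\<lambda>j. \<Sum>i\<in>{1..m}. y i * a i j)"
  define be where "be = (\<Sum>i\<in>{1..m}. y i * b i)"
  define C where "C = (\<Sum>j\<in>{1..n}. 2 * (al j)\<^sup>2 / Y)"
  define B0 where "B0 = 2 * (be + C) / Y"
  have Yp: "Y > 0" using Y by (simp add: Y_def)
  have "\<forall>p\<in>Kset n m a b xi. \<forall>j\<in>{0..n}. \<bar>p j\<bar> \<le> max 1 B0"
  proof (intro ballI)
    fix p j assume p: "p \<in> Kset n m a b xi" and j: "j \<in> {0..n}"
    have h1: "(\<Sum>i\<in>{1..m}. y i * dotJ n (nv xi a i) p) \<le> be"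
      unfolding be_def using p y by (intro sum_mono mult_left_mono) (auto simp: Kset_def)
    have "(\<Sum>i\<in>{1..m}. y i * dotJ n (nv xi a i) p) =
        (\<Sum>i\<in>{1..m}. y i * xi i * p 0) + 2 * (\<Sum>i\<in>{1..m}. \<Sum>j\<in>{1..n}. y i * a i j * p j)"
      by (simp add: dot_nv algebra_simps sum.distrib sum_distrib_left)
    also have "(\<Sum>i\<in>{1..m}. \<Sum>j\<in>{1..n}. y i * a i j * p j) = (\<Sum>j\<in>{1..n}. al j * p j)"
      unfolding al_def sum_distrib_right by (rule sum.swap)
    finally have h2: "(\<Sum>i\<in>{1..m}. y i * dotJ n (nv xi a i) p) = Y * p 0 + 2 * (\<Sum>j\<in>{1..n}. al j * p j)"
      by (simp add: Y_def sum_distrib_right)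
    have h3: "- (Y / 2 * (p j)\<^sup>2 + 2 * (al j)\<^sup>2 / Y) \<le> 2 * (al j * p j)" for j
    proof -
      have "(Y * p j + 2 * al j)\<^sup>2 = 2 * Y * (Y / 2 * (p j)\<^sup>2 + 2 * (al j * p j) + 2 * (al j)\<^sup>2 / Y)"
        using Yp by (simp add: field_simps power2_eq_square)
      moreover have "0 \<le> (Y * p j + 2 * al j)\<^sup>2" by simp
      ultimately have "0 \<le> Y / 2 * (p j)\<^sup>2 + 2 * (al j * p j) + 2 * (al j)\<^sup>2 / Y"
        using Yp by (simp add: zero_le_mult_iff)
      then show ?thesis by linarith
    qed
    have "(\<Sum>j\<in>{1..n}. - (Y / 2 * (p j)\<^sup>2 + 2 * (al j)\<^sup>2 / Y)) \<le> (\<Sum>j\<in>{1..n}. 2 * (al j * p j))"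
      by (rule sum_mono) (rule h3)
    moreover have "(\<Sum>j\<in>{1..n}. - (Y / 2 * (p j)\<^sup>2 + 2 * (al j)\<^sup>2 / Y)) = - (Y / 2 * (\<Sum>j\<in>{1..n}. (p j)\<^sup>2) + C)"
      by (simp only: sum_negf sum.distrib sum_distrib_left[symmetric] C_def)
    moreover have "(\<Sum>j\<in>{1..n}. 2 * (al j * p j)) = 2 * (\<Sum>j\<in>{1..n}. al j * p j)"
      by (simp only: sum_distrib_left[symmetric])
    ultimately have h4: "- (Y / 2 * (\<Sum>j\<in>{1..n}. (p j)\<^sup>2) + C) \<le> 2 * (\<Sum>j\<in>{1..n}. al j * p j)"
      by simp
    have sq: "(\<Sum>j\<in>{1..n}. (p j)\<^sup>2) \<le> p 0" using p by (simp add: Kset_def)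
    have "Y / 2 * (\<Sum>j\<in>{1..n}. (p j)\<^sup>2) \<le> Y / 2 * p 0" using sq Yp by (intro mult_left_mono) auto
    then have "Y / 2 * p 0 \<le> be + C" using h1 h2 h4 by linarith
    then have p0: "p 0 \<le> B0" using Yp by (simp add: B0_def field_simps)
    have nn: "0 \<le> (\<Sum>j\<in>{1..n}. (p j)\<^sup>2)" by (simp add: sum_nonneg)
    show "\<bar>p j\<bar> \<le> max 1 B0"
    proof (cases "j = 0")
      case True then show ?thesis using p0 sq nn by auto
    next
      case False
      then have "j \<in> {1..n}" using j by auto
      then have "(p j)\<^sup>2 \<le> (\<Sum>j\<in>{1..n}. (p j)\<^sup>2)" by (intro member_le_sum) auto
      then show ?thesis using p0 sq by (intro sq_bound) auto
    qed
  qed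
  then show ?thesis by blast
qed

lemma tend_dot:
  assumes "\<forall>j\<in>{0..n}. (\<lambda>k. P k j) \<longlonglongrightarrow> L j"
  shows "(\<lambda>k. dotJ n u (P k)) \<longlonglongrightarrow> dotJ n u L"
  unfolding dotJ_def using assms by (intro tendsto_intros) auto

lemma tend_sq:
  fixes P :: "nat \<Rightarrow> nat \<Rightarrow> real"
  assumes "\<forall>j\<in>{0..n}. (\<lambda>k. P k j) \<longlonglongrightarrow> L j"
  shows "(\<lambda>k. \<Sum>j\<in>{1..n}. f j * (P k j)\<^sup>2) \<longlonglongrightarrow> (\<Sum>j\<in>{1..n}. f j * (L j)\<^sup>2)"
proof (rule tendsto_sum)
  fix j assume "j \<in> {1..n}"
  then have "(\<lambda>k. P k j) \<longlonglongrightarrow> L j" using assms by auto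
  then show "(\<lambda>k. f j * (P k j)\<^sup>2) \<longlonglongrightarrow> f j * (L j)\<^sup>2" by (intro tendsto_intros)
qed

lemma tend_lin:
  fixes P :: "nat \<Rightarrow> nat \<Rightarrow> real"
  assumes "\<forall>j\<in>{0..n}. (\<lambda>k. P k j) \<longlonglongrightarrow> L j"
  shows "(\<lambda>k. \<Sum>j\<in>{1..n}. f j * P k j) \<longlonglongrightarrow> (\<Sum>j\<in>{1..n}. f j * L j)"
proof (rule tendsto_sum)
  fix j assume "j \<in> {1..n}"
  then have "(\<lambda>k. P k j) \<longlonglongrightarrow> L j" using assms by auto
  then show "(\<lambda>k. f j * P k j) \<longlonglongrightarrow> f j * L j" by (intro tendsto_intros)
qed

lemma tend_gf:
  assumes "\<forall>j\<in>{0..n}. (\<lambda>k. P k j) \<longlonglongrightarrow> L j"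
  shows "(\<lambda>k. gf n D c (P k)) \<longlonglongrightarrow> gf n D c L"
  unfolding gf_def using assms
  by (intro tendsto_intros tend_sq tend_lin) auto

lemma tend_sf:
  assumes "\<forall>j\<in>{0..n}. (\<lambda>k. P k j) \<longlonglongrightarrow> L j"
  shows "(\<lambda>k. sf n (P k)) \<longlonglongrightarrow> sf n L"
proof -
  have "(\<lambda>k. \<Sum>j\<in>{1..n}. 1 * (P k j)\<^sup>2) \<longlonglongrightarrow> (\<Sum>j\<in>{1..n}. 1 * (L j)\<^sup>2)" by (rule tend_sq[OF assms])
  then show ?thesis unfolding sf_def using assms by (intro tendsto_intros) auto
qed

lemma K_closed:
  assumes P: "\<forall>k. P k \<in> Kset n m a b xi" and L: "\<forall>j\<in>{0..n}. (\<lambda>k. P k j) \<longlonglongrightarrow> L j"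
  shows "L \<in> Kset n m a b xi"
proof -
  have "\<forall>i\<in>{1..m}. dotJ n (nv xi a i) L \<le> b i"
  proof
    fix i assume "i \<in> {1..m}"
    then show "dotJ n (nv xi a i) L \<le> b i"
      using P by (intro LIMSEQ_le_const2[OF tend_dot[OF L]]) (auto simp: Kset_def)
  qed
  moreover have "0 \<le> sf n L"
    using P by (intro LIMSEQ_le_const[OF tend_sf[OF L]]) (auto simp: Kset_def sf_def)
  ultimately show ?thesis by (simp add: Kset_def sf_def)
qed


lemma psd_diag: "psd_on N Y \<Longrightarrow> finite N \<Longrightarrow> j \<in> N \<Longrightarrow> Y j j \<ge> 0"
proof -
  assume a: "psd_on N Y" "finite N" "j \<in> N"
  then have "\<forall>v. 0 \<le> (\<Sum>j\<in>N. \<Sum>k\<in>N. v j * Y j k * v k)" unfolding psd_on_def by blast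
  from spec[OF this, of "\<lambda>k. if k = j then (1::real) else 0"]
  have "0 \<le> (\<Sum>j'\<in>N. \<Sum>k\<in>N. (if j' = j then 1 else 0) * Y j' k * (if k = j then (1::real) else 0))" by simp
  also have "\<dots> = (\<Sum>j'\<in>N. if j' = j then Y j' j else 0)"
  proof (rule sum.cong[OF refl])
    fix j' assume "j' \<in> N"
    have "(\<Sum>k\<in>N. (if j' = j then 1 else 0) * Y j' k * (if k = j then (1::real) else 0))
        = (\<Sum>k\<in>N. if k = j then (if j' = j then Y j' k else 0) else 0)" by (rule sum.cong) auto
    also have "\<dots> = (if j' = j then Y j' j else 0)" using a(2,3) by (simp add: sum.delta)
    finally show "(\<Sum>k\<in>N. (if j' = j then 1 else 0) * Y j' k * (if k = j then (1::real) else 0)) = (if j' = j then Y j' j else 0)" .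
  qed
  also have "\<dots> = Y j j" using a(2,3) by (simp add: sum.delta)
  finally show ?thesis .
qed


lemma dot_neg: "dotJ n u (\<lambda>j. - y j) = - dotJ n u y"
  by (simp add: dotJ_def sum_negf)

lemma move_case:
  assumes n: "1 \<le> n" and p: "ps \<in> Kset n m a b xi" and opt: "\<forall>p'\<in>Kset n m a b xi. gf n D c ps \<le> gf n D c p'"
    and s: "sf n ps > 0" and cA: "card (act n m a b xi ps) \<le> 1"
  shows "\<exists>p'. p' \<in> Kset n m a b xi \<and> gf n D c p' = gf n D c ps \<and> sf n p' < sf n ps"
proof -
  define A where "A = act n m a b xi ps"
  have finA: "finite A" by (simp add: A_def act_def)
  obtain u w where uw: "u \<noteq> 0 \<or> w \<noteq> 0" "\<forall>i\<in>A. xi i * w + 2 * a i 1 * u = 0"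
  proof (cases "A = {}")
    case True then show ?thesis using that[of 0 1] by auto
  next
    case False
    then obtain i where i: "i \<in> A" by auto
    have Ai: "A = {i}"
      proof -
      have "\<forall>x\<in>A. \<forall>z\<in>A. x = z" using cA finA card_le_Suc0_iff_eq[of A] by (simp add: A_def)
      then show ?thesis using i by blast
    qed
    show ?thesis
    proof (cases "xi i = 0 \<and> a i 1 = 0")
      case True then show ?thesis using that[of 0 1] Ai by auto
    next
      case False then show ?thesis using that[of "xi i" "- 2 * a i 1"] Ai by (auto simp: algebra_simps)
    qed
  qed
  obtain u' w' where uw': "w' - 2 * ps 1 * u' \<le> 0" "w' - 2 * ps 1 * u' < 0 \<or> u' \<noteq> 0"
    "\<forall>i\<in>A. xi i * w' + 2 * a i 1 * u' = 0"
  proof (cases "w - 2 * ps 1 * u \<le> 0")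
    case True
    then show ?thesis using that[of w u] uw by (cases "u = 0") auto
  next
    case False
    have h: "\<forall>i\<in>A. xi i * (-w) + 2 * a i 1 * (-u) = 0"
    proof
      fix i assume "i \<in> A"
      with uw(2) have "xi i * w + 2 * a i 1 * u = 0" by auto
      then show "xi i * (-w) + 2 * a i 1 * (-u) = 0" by (simp only: mult_minus_right)
    qed
    have "-w - 2 * ps 1 * (-u) < 0" using False by simp
    then show ?thesis using that[of "-w" "-u", OF _ _ h] by simp
  qed
  define y where "y = (\<lambda>j::nat. if j = 0 then w' else if j = 1 then u' else (0::real))"
  have sy: "(\<Sum>j\<in>{1..n}. f j * y j) = f 1 * u'" for f
  proof -
    have "(\<Sum>j\<in>{1..n}. f j * y j) = (\<Sum>j\<in>{1..n}. if j = 1 then f 1 * u' else 0)"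
      by (rule sum.cong) (auto simp: y_def)
    then show ?thesis using n by (simp add: sum.delta)
  qed
  have dy: "dotJ n (nv xi a i) y = xi i * w' + 2 * a i 1 * u'" for i
  proof -
    have "dotJ n (nv xi a i) y = xi i * y 0 + 2 * (\<Sum>j\<in>{1..n}. a i j * y j)" by (rule dot_nv)
    also have "\<dots> = xi i * y 0 + 2 * (a i 1 * u')" by (simp only: sy)
    finally show ?thesis by (simp add: y_def)
  qed
  have yA: "\<forall>i\<in>A. dotJ n (nv xi a i) y \<le> 0" "\<forall>i\<in>A. dotJ n (nv xi a i) (\<lambda>j. - y j) \<le> 0"
    using uw'(3) by (auto simp: dy dot_neg)
  have "dotJ n (gr n D c ps) y \<ge> 0" using nodescent[OF p opt s] yA(1) by (simp add: A_def)
  moreover have "dotJ n (gr n D c ps) (\<lambda>j. - y j) \<ge> 0" using nodescent[OF p opt s] yA(2) by (simp add: A_def)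
  ultimately have G0: "dotJ n (gr n D c ps) y = 0" by (simp add: dot_neg)
  have Q0: "(\<Sum>j\<in>{1..n}. (D j - D 1) * (y j)\<^sup>2) = 0"
    by (rule sum.neutral) (auto simp: y_def)
  have "eventually (\<lambda>t. 0 < t \<and> (\<lambda>j. ps j + t * y j) \<in> Kset n m a b xi) (at_right 0)"
    using eventually_conj[OF eventually_at_right_less[of "0::real"] feas_move[OF p s]] yA(1) by (simp add: A_def)
  then obtain t where t: "0 < t" "(\<lambda>j. ps j + t * y j) \<in> Kset n m a b xi"
    using eventually_happens[of _ "at_right (0::real)"] by (auto simp: trivial_limit_at_right_real)
  have g: "gf n D c (\<lambda>j. ps j + t * y j) = gf n D c ps" unfolding g_exp G0 Q0 by simp
  have split: "(\<Sum>j\<in>{1..n}. f j) = f 1 + (\<Sum>j\<in>{2..n}. f j)" for f :: "nat \<Rightarrow> real"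
    using n by (simp add: sum.atLeast_Suc_atMost numeral_2_eq_2)
  have r: "(\<Sum>j\<in>{2..n}. (ps j + t * y j)\<^sup>2) = (\<Sum>j\<in>{2..n}. (ps j)\<^sup>2)"
    by (rule sum.cong) (auto simp: y_def)
  have "sf n (\<lambda>j. ps j + t * y j) = sf n ps + t * (w' - 2 * ps 1 * u') - t\<^sup>2 * u'\<^sup>2"
    unfolding sf_def split[of "\<lambda>j. (ps j + t * y j)\<^sup>2"] split[of "\<lambda>j. (ps j)\<^sup>2"] r
    by (simp add: y_def power2_eq_square algebra_simps)
  moreover have "t * (w' - 2 * ps 1 * u') - t\<^sup>2 * u'\<^sup>2 < 0"
  proof (cases "u' = 0")
    case True then show ?thesis using uw' t by (simp add: mult_pos_neg)
  next
    case False
    then have "t\<^sup>2 * u'\<^sup>2 > 0" using t by simp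
    moreover have "t * (w' - 2 * ps 1 * u') \<le> 0" using uw'(1) t by (simp add: mult_nonneg_nonpos)
    ultimately show ?thesis by simp
  qed
  ultimately show ?thesis using t g by (intro exI[of _ "\<lambda>j. ps j + t * y j"]) auto
qed



lemma kkt_case:
  assumes n: "1 \<le> n" and um: "\<forall>j\<in>{1..n}. j \<noteq> 1 \<longrightarrow> D 1 < D j" and d1: "d1_star n D = D 1"
    and p: "ps \<in> Kset n m a b xi" and opt: "\<forall>p'\<in>Kset n m a b xi. gf n D c ps \<le> gf n D c p'"
    and s: "sf n ps > 0"
  shows "sub_val n m D c a b xi (act n m a b xi ps) \<le> ereal (- sf n ps)"
proof -
  define A where "A = act n m a b xi ps"
  have finA: "finite A" and Asub: "A \<subseteq> {1..m}" by (auto simp: A_def act_def)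
  have "\<forall>y. (\<forall>i\<in>A. dotJ n (nv xi a i) y \<le> 0) \<longrightarrow> dotJ n (\<lambda>j. - gr n D c ps j) y \<le> 0"
  proof (intro allI impI)
    fix y assume "\<forall>i\<in>A. dotJ n (nv xi a i) y \<le> 0"
    then have "dotJ n (gr n D c ps) y \<ge> 0" using nodescent[OF p opt s] by (simp add: A_def)
    moreover have "dotJ n (\<lambda>j. - gr n D c ps j) y = - dotJ n (gr n D c ps) y"
      by (simp add: dotJ_def sum_negf)
    ultimately show "dotJ n (\<lambda>j. - gr n D c ps j) y \<le> 0" by simp
  qed
  from farkas[OF finA this] obtain \<mu> where mu: "\<forall>i\<in>A. \<mu> i \<ge> 0"
    "\<forall>j\<in>{0..n}. - gr n D c ps j = (\<Sum>i\<in>A. \<mu> i * nv xi a i j)" by blast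
  define \<mu>' where "\<mu>' = (\<lambda>i. if i \<in> A then \<mu> i else 0)"
  have sA: "(\<Sum>i\<in>A. f i * \<mu>' i) = (\<Sum>i\<in>A. f i * \<mu> i)" for f
    by (rule sum.cong) (auto simp: \<mu>'_def)
  have sM: "(\<Sum>i\<in>{1..m}. f i * \<mu>' i) = (\<Sum>i\<in>A. f i * \<mu> i)" for f
  proof -
    have "(\<Sum>i\<in>{1..m}. f i * \<mu>' i) = (\<Sum>i\<in>{1..m}. if i \<in> A then f i * \<mu> i else 0)"
      by (rule sum.cong) (auto simp: \<mu>'_def)
    also have "\<dots> = (\<Sum>i\<in>{1..m} \<inter> A. f i * \<mu> i)" by (simp add: sum.inter_restrict)
    also have "{1..m} \<inter> A = A" using Asub by auto
    finally show ?thesis .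
  qed
  have j0: "- D 1 = (\<Sum>i\<in>A. xi i * \<mu> i)"
    using mu(2)[rule_format, of 0] by (simp add: gr_def nv_def mult.commute)
  have j1: "- (2 * c 1) = 2 * (\<Sum>i\<in>A. a i 1 * \<mu> i)"
    using mu(2)[rule_format, of 1] n by (simp add: gr_def nv_def sum_distrib_left mult.commute mult.left_commute)
  have xm: "x_mu n m D c a \<mu>' j = ps j" if j: "j \<in> {1..n} - {1}" for j
  proof -
    have j0: "j \<noteq> 0" "j \<in> {0..n}" using j by auto
    have pos: "D j - D 1 > 0" using um j by auto
    have "- (2 * (D j - D 1) * ps j + 2 * c j) = 2 * (\<Sum>i\<in>A. a i j * \<mu> i)"
      using mu(2)[rule_format, OF j0(2)] j0(1) by (simp add: gr_def nv_def sum_distrib_left mult.commute mult.left_commute)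
    then have "ps j = - (c j + (\<Sum>i\<in>A. a i j * \<mu> i)) / (D j - D 1)"
      using pos by (simp add: field_simps)
    then show ?thesis unfolding x_mu_def d1 sM by simp
  qed
  have rem: "(\<Sum>j\<in>{1..n}. f j) = f 1 + (\<Sum>j\<in>{1..n} - {1}. f j)" for f :: "nat \<Rightarrow> real"
    using n by (simp add: sum.remove)
  have sx: "(\<Sum>j\<in>{1..n} - {1}. f j * x_mu n m D c a \<mu>' j) = (\<Sum>j\<in>{1..n} - {1}. f j * ps j)" for f
    by (rule sum.cong) (auto simp: xm)
  have sx2: "(\<Sum>j\<in>{1..n} - {1}. (x_mu n m D c a \<mu>' j)\<^sup>2) = (\<Sum>j\<in>{1..n} - {1}. (ps j)\<^sup>2)"
    by (rule sum.cong) (auto simp: xm)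
  have e: "dotJ n (nv xi a i) ps = xi i * ps 0 + 2 * a i 1 * ps 1 + 2 * (\<Sum>j\<in>{1..n} - {1}. a i j * ps j)" for i
    by (simp only: dot_nv rem[of "\<lambda>j. a i j * ps j"]) (simp add: algebra_simps)
  have mem: "(\<mu>', ps 1, ps 0) \<in> sub_feasible n m D c a b xi A"
    unfolding sub_feasible_def
  proof (simp only: mem_Collect_eq prod.case, intro conjI)
    show "\<forall>i. i \<notin> A \<longrightarrow> \<mu>' i = 0" by (simp add: \<mu>'_def)
    show "d1_star n D + (\<Sum>i\<in>A. xi i * \<mu>' i) = 0" using j0 by (simp add: d1 sA)
    show "c 1 + (\<Sum>i\<in>A. a i 1 * \<mu>' i) = 0" using j1 by (simp add: sA)
    show "\<forall>i\<in>A. xi i * ps 0 + 2 * a i 1 * ps 1 + 2 * (\<Sum>j\<in>{1..n} - {1}. a i j * x_mu n m D c a \<mu>' j) = b i"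
    proof
      fix i assume "i \<in> A"
      then have "dotJ n (nv xi a i) ps = b i" by (simp add: A_def act_def)
      then show "xi i * ps 0 + 2 * a i 1 * ps 1 + 2 * (\<Sum>j\<in>{1..n} - {1}. a i j * x_mu n m D c a \<mu>' j) = b i"
        unfolding sx using e[of i] by linarith
    qed
    show "\<forall>i\<in>{1..m} - A. xi i * ps 0 + 2 * a i 1 * ps 1 + 2 * (\<Sum>j\<in>{1..n} - {1}. a i j * x_mu n m D c a \<mu>' j) \<le> b i"
    proof
      fix i assume "i \<in> {1..m} - A"
      then have "dotJ n (nv xi a i) ps \<le> b i" using p by (simp add: Kset_def)
      then show "xi i * ps 0 + 2 * a i 1 * ps 1 + 2 * (\<Sum>j\<in>{1..n} - {1}. a i j * x_mu n m D c a \<mu>' j) \<le> b i"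
        unfolding sx using e[of i] by linarith
    qed
    show "\<forall>i\<in>A. 0 \<le> \<mu>' i" using mu(1) by (simp add: \<mu>'_def)
  qed
  have obj: "sub_obj n m D c a \<mu>' (ps 1) (ps 0) = - sf n ps"
    unfolding sub_obj_def sf_def sx2 rem[of "\<lambda>j. (ps j)\<^sup>2"] by simp
  have "sub_val n m D c a b xi A \<le> ereal (sub_obj n m D c a \<mu>' (ps 1) (ps 0))"
    unfolding sub_val_def using mem by (rule INF_lower2) simp
  then show ?thesis using obj by (simp add: A_def)
qed



theorem mainTheorem13:
  fixes n m :: nat
    and D c b xi :: "nat \<Rightarrow> real"
    and a :: "nat \<Rightarrow> nat \<Rightarrow> real"
  assumes n_pos: "1 \<le> n"
    and unique_min: "\<forall>j\<in>{1..n}. j \<noteq> 1 \<longrightarrow> D 1 < D j"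
    and P_feas: "P_feasible n m a b xi \<noteq> {}"
    and ybar: "\<exists>y::nat \<Rightarrow> real. (\<forall>i\<in>{1..m}. y i \<ge> 0) \<and> (\<Sum>i\<in>{1..m}. y i * xi i) > 0"
    and slater: "\<exists>x X. Shor_strictly_feasible n m a b xi x X"
    and cond: "\<forall>I. I \<subseteq> {1..m} \<and> card I \<ge> 2 \<longrightarrow> sub_val n m D c a b xi I \<ge> 0"
  shows "v_star n m D c a b xi = c_star n m D c a b xi"
proof -
  define K where "K = Kset n m a b xi"
  have D1: "\<forall>j\<in>{1..n}. D 1 \<le> D j" using unique_min by (auto simp: less_imp_le)
  have d1: "d1_star n D = D 1" unfolding d1_star_def using D1 n_pos by (intro Min_eqI) auto
  obtain yb where yb: "\<forall>i\<in>{1..m}. yb i \<ge> 0" "(\<Sum>i\<in>{1..m}. yb i * xi i) > 0" using ybar by blast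
  obtain B where B: "\<forall>p\<in>K. \<forall>j\<in>{0..n}. \<bar>p j\<bar> \<le> B" using K_bound[OF yb] K_def by blast
  obtain x0 where x0: "x0 \<in> P_feasible n m a b xi" using P_feas by blast
  have embed: "(\<lambda>j. if j = 0 then v else x j) \<in> K"
    if x: "\<forall>i\<in>{1..m}. xi i * v + 2 * (\<Sum>j\<in>{1..n}. a i j * x j) \<le> b i"
      and v: "(\<Sum>j\<in>{1..n}. (x j)\<^sup>2) \<le> v" for x v
  proof -
    let ?p = "\<lambda>j. if j = 0 then v else x j"
    have s1: "(\<Sum>j\<in>{1..n}. f j * ?p j) = (\<Sum>j\<in>{1..n}. f j * x j)" for f
      by (rule sum.cong) auto
    have s2: "(\<Sum>j\<in>{1..n}. (?p j)\<^sup>2) = (\<Sum>j\<in>{1..n}. (x j)\<^sup>2)"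
      by (rule sum.cong) auto
    show ?thesis unfolding K_def Kset_def using x v by (simp only: mem_Collect_eq dot_nv s1 s2) simp
  qed
  have x0K: "(\<lambda>j. if j = 0 then (\<Sum>j\<in>{1..n}. (x0 j)\<^sup>2) else x0 j) \<in> K"
    using x0 by (intro embed) (auto simp: P_feasible_def)
  have "\<exists>p\<in>K. \<forall>p'\<in>K. gf n D c p \<le> gf n D c p'"
  proof (rule attain[of "{0..n}" K B])
    show "K \<noteq> {}" using x0K by blast
    show "\<forall>p\<in>K. \<forall>j\<in>{0..n}. \<bar>p j\<bar> \<le> B" by (rule B)
    fix P L assume P: "\<forall>k. P k \<in> K" and L: "\<forall>j\<in>{0..n}. (\<lambda>k. P k j) \<longlonglongrightarrow> L j"
    show "L \<in> K" using K_closed[OF _ L] P by (simp add: K_def)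
    show "(\<lambda>k. gf n D c (P k)) \<longlonglongrightarrow> gf n D c L" by (rule tend_gf[OF L])
  qed simp
  then obtain pg where pg: "pg \<in> K" "\<forall>p'\<in>K. gf n D c pg \<le> gf n D c p'" by blast
  define Opt where "Opt = {p\<in>K. gf n D c p = gf n D c pg}"
  have "\<exists>p\<in>Opt. \<forall>p'\<in>Opt. sf n p \<le> sf n p'"
  proof (rule attain[of "{0..n}" Opt B])
    show "Opt \<noteq> {}" using pg by (auto simp: Opt_def)
    show "\<forall>p\<in>Opt. \<forall>j\<in>{0..n}. \<bar>p j\<bar> \<le> B" using B by (auto simp: Opt_def)
    fix P L assume P: "\<forall>k. P k \<in> Opt" and L: "\<forall>j\<in>{0..n}. (\<lambda>k. P k j) \<longlonglongrightarrow> L j"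
    show "(\<lambda>k. sf n (P k)) \<longlonglongrightarrow> sf n L" by (rule tend_sf[OF L])
    have LK: "L \<in> K" using K_closed[OF _ L] P by (auto simp: K_def Opt_def)
    have "(\<lambda>k. gf n D c (P k)) \<longlonglongrightarrow> gf n D c L" by (rule tend_gf[OF L])
    moreover have "(\<lambda>k. gf n D c (P k)) = (\<lambda>k. gf n D c pg)" using P by (auto simp: Opt_def)
    ultimately have "(\<lambda>k. gf n D c pg) \<longlonglongrightarrow> gf n D c L" by simp
    then have "gf n D c L = gf n D c pg" using LIMSEQ_unique[OF tendsto_const] by metis
    then show "L \<in> Opt" using LK by (simp add: Opt_def)
  qed simp
  then obtain ps where ps: "ps \<in> Opt" "\<forall>p'\<in>Opt. sf n ps \<le> sf n p'" by blast
  have psK: "ps \<in> K" and psopt: "\<forall>p'\<in>K. gf n D c ps \<le> gf n D c p'"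
    using ps(1) pg by (auto simp: Opt_def)
  have s0: "sf n ps = 0"
  proof (rule ccontr)
    assume "sf n ps \<noteq> 0"
    moreover have "sf n ps \<ge> 0" using psK by (simp add: K_def Kset_def sf_def)
    ultimately have spos: "sf n ps > 0" by simp
    show False
    proof (cases "card (act n m a b xi ps) \<le> 1")
      case True
      from move_case[OF n_pos psK[unfolded K_def] psopt[unfolded K_def] spos True]
      obtain p' where "p' \<in> K" "gf n D c p' = gf n D c ps" "sf n p' < sf n ps" by (auto simp: K_def)
      then show False using ps psK by (auto simp: Opt_def)
    next
      case False
      have "act n m a b xi ps \<subseteq> {1..m}" by (auto simp: act_def)
      moreover have "2 \<le> card (act n m a b xi ps)" using False by simp
      ultimately have "sub_val n m D c a b xi (act n m a b xi ps) \<ge> 0" using cond by blast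
      moreover have "sub_val n m D c a b xi (act n m a b xi ps) \<le> ereal (- sf n ps)"
        by (rule kkt_case[OF n_pos unique_min d1 psK[unfolded K_def] psopt[unfolded K_def] spos])
      ultimately have "(0::ereal) \<le> ereal (- sf n ps)" by (rule order_trans)
      then show False using spos by simp
    qed
  qed
  have ps0: "ps 0 = (\<Sum>j\<in>{1..n}. (ps j)\<^sup>2)" using s0 by (simp add: sf_def)
  have psP: "ps \<in> P_feasible n m a b xi"
  proof -
    have "\<forall>i\<in>{1..m}. dotJ n (nv xi a i) ps \<le> b i" using psK by (simp add: K_def Kset_def)
    then show ?thesis unfolding P_feasible_def dot_nv ps0 by simp
  qed
  have gP: "P_obj n D c ps = gf n D c ps"
    unfolding P_obj_def gf_def ps0
    by (simp add: algebra_simps sum_subtractf sum_distrib_left)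
  have c_le: "c_star n m D c a b xi \<le> ereal (gf n D c ps)"
    unfolding c_star_def using INF_lower[OF psP, of "\<lambda>x. ereal (P_obj n D c x)"] gP by simp
  have v_ge: "ereal (gf n D c ps) \<le> v_star n m D c a b xi"
    unfolding v_star_def
  proof (rule INF_greatest)
    fix q assume q: "q \<in> Shor_feasible n m a b xi"
    obtain x X where qx: "q = (x, X)" by (cases q)
    have lin: "\<forall>i\<in>{1..m}. xi i * (\<Sum>j\<in>{1..n}. X j j) + 2 * (\<Sum>j\<in>{1..n}. a i j * x j) \<le> b i"
      and psd: "psd_on {1..n} (shifted X x)" using q qx by (auto simp: Shor_feasible_def)
    have diag: "(x j)\<^sup>2 \<le> X j j" if "j \<in> {1..n}" for j
      using psd_diag[OF psd _ that] by (simp add: shifted_def power2_eq_square)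
    have sq: "(\<Sum>j\<in>{1..n}. (x j)\<^sup>2) \<le> (\<Sum>j\<in>{1..n}. X j j)" by (rule sum_mono) (rule diag)
    let ?p = "\<lambda>j. if j = 0 then (\<Sum>j\<in>{1..n}. X j j) else x j"
    have pK: "?p \<in> K" by (rule embed[OF lin sq])
    have "gf n D c ps \<le> gf n D c ?p" using psopt pK by blast
    also have "gf n D c ?p = (\<Sum>j\<in>{1..n}. (D j - D 1) * (x j)\<^sup>2) + 2 * (\<Sum>j\<in>{1..n}. c j * x j)
        + D 1 * (\<Sum>j\<in>{1..n}. X j j)"
    proof -
      have "(\<Sum>j\<in>{1..n}. (D j - D 1) * (?p j)\<^sup>2) = (\<Sum>j\<in>{1..n}. (D j - D 1) * (x j)\<^sup>2)"
        by (rule sum.cong) auto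
      moreover have "(\<Sum>j\<in>{1..n}. c j * ?p j) = (\<Sum>j\<in>{1..n}. c j * x j)" by (rule sum.cong) auto
      ultimately show ?thesis unfolding gf_def by simp
    qed
    also have "\<dots> \<le> Shor_obj n D c x X"
    proof -
      have "(\<Sum>j\<in>{1..n}. (D j - D 1) * (x j)\<^sup>2) \<le> (\<Sum>j\<in>{1..n}. (D j - D 1) * X j j)"
        using D1 diag by (intro sum_mono mult_left_mono) auto
      moreover have "(\<Sum>j\<in>{1..n}. (D j - D 1) * X j j) = (\<Sum>j\<in>{1..n}. D j * X j j) - D 1 * (\<Sum>j\<in>{1..n}. X j j)"
        by (simp add: algebra_simps sum_subtractf sum_distrib_left)
      ultimately show ?thesis unfolding Shor_obj_def by linarith
    qed
    finally show "ereal (gf n D c ps) \<le> ereal (Shor_obj n D c (fst q) (snd q))" using qx by simp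
  qed
  have v_le: "v_star n m D c a b xi \<le> c_star n m D c a b xi"
    unfolding c_star_def
  proof (rule INF_greatest)
    fix x assume x: "x \<in> P_feasible n m a b xi"
    let ?X = "\<lambda>j k. x j * x k"
    have mem: "(x, ?X) \<in> Shor_feasible n m a b xi"
      using x by (simp add: Shor_feasible_def P_feasible_def psd_on_def shifted_def power2_eq_square)
    have oe: "Shor_obj n D c x ?X = P_obj n D c x"
      by (simp add: Shor_obj_def P_obj_def power2_eq_square)
    show "v_star n m D c a b xi \<le> ereal (P_obj n D c x)"
      unfolding v_star_def using INF_lower[OF mem, of "\<lambda>p. ereal (Shor_obj n D c (fst p) (snd p))"] oe by simp
  qed
  have "c_star n m D c a b xi \<le> v_star n m D c a b xi" using c_le v_ge by (rule order_trans)
  with v_le show ?thesis by (rule antisym)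
qed


end
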